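(* Let $a>b>0$ and let $E$ be the ellipse $\frac{x^2}{a^2}+\frac{y^2}{b^2}=1$. For a 3-periodic billiard orbit $T$ in $E$, let $r,R$ be the inradius and circumradius of $T$, let $A'$ be the area of the excentral triangle of $T$ and $A''$ the area of the extouch triangle of $T$. Then $A'/A''=(2R/r)^2$, and this ratio is the same for all 3-periodic orbits in $E$.
   Context: A 3-periodic billiard orbit in the ellipse $E$ is a nondegenerate triangle $P_1P_2P_3$ with all vertices on $E$ such that at each vertex $P_i$ the normal line to $E$ at $P_i$ bisects the interior angle of the triangle at $P_i$. The excentral triangle has vertices at the three excenters of $T$. The extouch triangle has as vertices the three points where each excircle of $T$ touches the corresponding side (segment) of $T$. *)

theory Defs
  imports "HOL-Analysis.Analysis"
begin

type_synonym pt = "real \<times> real"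

definition on_ellipse :: "real \<Rightarrow> real \<Rightarrow> pt \<Rightarrow> bool" where
  "on_ellipse a b P \<longleftrightarrow> (fst P)^2 / a^2 + (snd P)^2 / b^2 = 1"

definition cross2 :: "pt \<Rightarrow> pt \<Rightarrow> real" where
  "cross2 u v = fst u * snd v - snd u * fst v"

definition ellipse_normal :: "real \<Rightarrow> real \<Rightarrow> pt \<Rightarrow> pt" where
  "ellipse_normal a b P = (fst P / a^2, snd P / b^2)"

definition int_bisector_dir :: "pt \<Rightarrow> pt \<Rightarrow> pt \<Rightarrow> pt" where
  "int_bisector_dir P Q R = (1 / dist Q P) *\<^sub>R (Q - P) + (1 / dist R P) *\<^sub>R (R - P)"

definition normal_bisects :: "real \<Rightarrow> real \<Rightarrow> pt \<Rightarrow> pt \<Rightarrow> pt \<Rightarrow> bool" where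
  "normal_bisects a b P Q R \<longleftrightarrow> cross2 (ellipse_normal a b P) (int_bisector_dir P Q R) = 0"

definition billiard3 :: "real \<Rightarrow> real \<Rightarrow> pt \<Rightarrow> pt \<Rightarrow> pt \<Rightarrow> bool" where
  "billiard3 a b P1 P2 P3 \<longleftrightarrow>
     \<not> collinear {P1, P2, P3} \<and>
     on_ellipse a b P1 \<and> on_ellipse a b P2 \<and> on_ellipse a b P3 \<and>
     normal_bisects a b P1 P2 P3 \<and> normal_bisects a b P2 P3 P1 \<and> normal_bisects a b P3 P1 P2"

definition tri_area :: "pt \<Rightarrow> pt \<Rightarrow> pt \<Rightarrow> real" where
  "tri_area A B C = \<bar>cross2 (B - A) (C - A)\<bar> / 2"

definition circumradius :: "pt \<Rightarrow> pt \<Rightarrow> pt \<Rightarrow> real" where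
  "circumradius A B C = (THE R. \<exists>Z. dist Z A = R \<and> dist Z B = R \<and> dist Z C = R)"

definition incenter :: "pt \<Rightarrow> pt \<Rightarrow> pt \<Rightarrow> pt" where
  "incenter A B C =
     (1 / (dist B C + dist A C + dist A B)) *\<^sub>R
       (dist B C *\<^sub>R A + dist A C *\<^sub>R B + dist A B *\<^sub>R C)"

definition inradius :: "pt \<Rightarrow> pt \<Rightarrow> pt \<Rightarrow> real" where
  "inradius A B C = infdist (incenter A B C) (affine hull {B, C})"

text \<open>Excenter opposite vertex A (centre of the excircle tangent to side BC).\<close>
definition excenter :: "pt \<Rightarrow> pt \<Rightarrow> pt \<Rightarrow> pt" where
  "excenter A B C =
     (1 / (- dist B C + dist A C + dist A B)) *\<^sub>R
       (- (dist B C *\<^sub>R A) + dist A C *\<^sub>R B + dist A B *\<^sub>R C)"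

definition foot :: "pt \<Rightarrow> pt \<Rightarrow> pt \<Rightarrow> pt" where
  "foot X B C = B + (((X - B) \<bullet> (C - B)) / (norm (C - B))^2) *\<^sub>R (C - B)"

text \<open>Extouch point on side BC: where the excircle opposite A touches BC
  (foot of the perpendicular from the excenter to BC).\<close>
definition extouch_pt :: "pt \<Rightarrow> pt \<Rightarrow> pt \<Rightarrow> pt" where
  "extouch_pt A B C = foot (excenter A B C) B C"

definition excentral_area :: "pt \<Rightarrow> pt \<Rightarrow> pt \<Rightarrow> real" where
  "excentral_area A B C = tri_area (excenter A B C) (excenter B C A) (excenter C A B)"

definition extouch_area :: "pt \<Rightarrow> pt \<Rightarrow> pt \<Rightarrow> real" where
  "extouch_area A B C = tri_area (extouch_pt A B C) (extouch_pt B C A) (extouch_pt C A B)"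

end

theory Submission
  imports Defs
begin

lemma dist_sq: "(dist (x1,y1) (x2::real,y2::real))^2 = (x1-x2)^2+(y1-y2)^2"
  by (simp add: dist_Pair_Pair dist_real_def)

lemma cross_ne0:
  assumes "\<not> collinear {A,B,C}"
  shows "cross2 (B-A) (C-A) \<noteq> 0"
proof
  assume h: "cross2 (B-A) (C-A) = 0"
  obtain xa ya where A: "A = (xa,ya)" by (cases A)
  obtain xb yb where B: "B = (xb,yb)" by (cases B)
  obtain xc yc where C: "C = (xc,yc)" by (cases C)
  have h': "(xb-xa)*(yc-ya) - (yb-ya)*(xc-xa) = 0" using h by (simp add: cross2_def A B C)
  have "collinear {A,B,C}"
  proof (cases "A = C")
    case True then show ?thesis by (simp add: collinear_3_expand)
  next
    case False
    show ?thesis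
    proof (cases "xa = xc")
      case True
      then have "ya \<noteq> yc" using False A C by auto
      define u where "u = (yb - yc)/(ya-yc)"
      have "(xb-xa)*(yc-ya) = 0" using h' True by simp
      then have "xb = xa" using \<open>ya \<noteq> yc\<close> by simp
      moreover have "yb = u*ya + (1-u)*yc"
      proof -
        have "u*(ya-yc) = yb-yc" unfolding u_def using \<open>ya \<noteq> yc\<close> by simp
        then show ?thesis by (simp add: algebra_simps)
      qed
      ultimately have "B = u *\<^sub>R A + (1-u) *\<^sub>R C"
        using True unfolding A B C by (simp add: algebra_simps)
      then show ?thesis by (auto simp: collinear_3_expand)
    next
      case False
      define u where "u = (xb - xc)/(xa-xc)"
      have "B = u *\<^sub>R A + (1-u) *\<^sub>R C"
      proof -
        have "xa - xc \<noteq> 0" using False by simp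
        have u: "u*(xa-xc) = xb-xc" unfolding u_def using \<open>xa - xc \<noteq> 0\<close> by simp
        then have 1: "xb = u*xa + (1-u)*xc" by (simp add: algebra_simps)
        have "yb*(xa-xc) = (u*ya + (1-u)*yc)*(xa-xc)" using u h' by algebra
        then have 2: "yb = u*ya + (1-u)*yc" using \<open>xa - xc \<noteq> 0\<close> by simp
        show ?thesis using 1 2 unfolding A B C by simp
      qed
      then show ?thesis by (auto simp: collinear_3_expand)
    qed
  qed
  then show False using assms by simp
qed

lemma exc_alg0:
  fixes a b c xa ya xb yb xc yc i1 i2 i3 :: real
  assumes "i1*(-a+b+c) = 1" "i2*(a-b+c) = 1" "i3*(a+b-c) = 1"
  shows "(i2*(a*xa-b*xb+c*xc)-i1*(-a*xa+b*xb+c*xc))*(i3*(a*ya+b*yb-c*yc)-i1*(-a*ya+b*yb+c*yc))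
       - (i2*(a*ya-b*yb+c*yc)-i1*(-a*ya+b*yb+c*yc))*(i3*(a*xa+b*xb-c*xc)-i1*(-a*xa+b*xb+c*xc)) =
     4*a*b*c*i1*i2*i3 * ((xb-xa)*(yc-ya)-(yb-ya)*(xc-xa))"
  using assms by algebra

lemma ext_alg0:
  fixes a b c xa ya xb yb xc yc j1 j2 j3 :: real
  assumes "j1*(2*a) = 1" "j2*(2*b) = 1" "j3*(2*c) = 1"
  shows "((xc + (-a+b+c)*j2*(xa-xc)) - (xb + (a+b-c)*j1*(xc-xb)))*((ya + (a-b+c)*j3*(yb-ya)) - (yb + (a+b-c)*j1*(yc-yb)))
       - ((yc + (-a+b+c)*j2*(ya-yc)) - (yb + (a+b-c)*j1*(yc-yb)))*((xa + (a-b+c)*j3*(xb-xa)) - (xb + (a+b-c)*j1*(xc-xb))) =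
     ((-a+b+c)*(a-b+c)*(a+b-c))*j1*j2*j3*2 * ((xb-xa)*(yc-ya)-(yb-ya)*(xc-xa))"
  using assms by algebra

lemma dist_sq': "(dist P Q)^2 = (fst P - fst Q)^2 + (snd P - snd Q)^2"
  by (cases P; cases Q) (simp add: dist_sq)

lemma excenter_fst: "fst (excenter A B C) = (1/(-dist B C + dist A C + dist A B)) * (-dist B C * fst A + dist A C * fst B + dist A B * fst C)"
  by (simp add: excenter_def)
lemma excenter_snd: "snd (excenter A B C) = (1/(-dist B C + dist A C + dist A B)) * (-dist B C * snd A + dist A C * snd B + dist A B * snd C)"
  by (simp add: excenter_def)

lemma extouch_eq:
  assumes nz: "-dist B C + dist A C + dist A B \<noteq> 0" "dist B C \<noteq> 0"
  shows "extouch_pt A B C = B + ((dist B C + dist A C - dist A B)/(2*dist B C)) *\<^sub>R (C - B)"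
proof -
  define a where "a = dist B C"
  define b where "b = dist A C"
  define c where "c = dist A B"
  define i1 where "i1 = 1/(-a+b+c)"
  have i1: "i1*(-a+b+c) = 1" using nz unfolding i1_def a_def b_def c_def by simp
  have a2: "a^2 = (fst B - fst C)^2 + (snd B - snd C)^2" unfolding a_def by (rule dist_sq')
  have b2: "b^2 = (fst A - fst C)^2 + (snd A - snd C)^2" unfolding b_def by (rule dist_sq')
  have c2: "c^2 = (fst A - fst B)^2 + (snd A - snd B)^2" unfolding c_def by (rule dist_sq')
  have n2: "(norm (C - B))^2 = a^2"
    by (simp add: a_def dist_norm norm_minus_commute)
  have ex: "fst (excenter A B C) = i1 * (-a * fst A + b * fst B + c * fst C)"
      "snd (excenter A B C) = i1 * (-a * snd A + b * snd B + c * snd C)"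
    by (simp_all add: excenter_fst excenter_snd i1_def a_def b_def c_def)
  have key: "(excenter A B C - B) \<bullet> (C - B) = a * (a+b-c)/2"
  proof -
    have "(excenter A B C - B) \<bullet> (C - B) = (fst (excenter A B C) - fst B)*(fst C - fst B) + (snd (excenter A B C) - snd B)*(snd C - snd B)"
      by (simp add: inner_prod_def)
    also have "\<dots> = a * (a+b-c)/2"
      unfolding ex using i1 a2 b2 c2 by algebra
    finally show ?thesis .
  qed
  have "a \<noteq> 0" using nz a_def by simp
  then show ?thesis
    unfolding extouch_pt_def foot_def key n2 by (simp add: a_def b_def c_def power2_eq_square)
qed

lemma tri_basic:
  assumes nc: "\<not> collinear {A,B,C}"
  defines "a \<equiv> dist B C" and "b \<equiv> dist A C" and "c \<equiv> dist A B"
    and "cr \<equiv> cross2 (B-A) (C-A)"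
  shows "4*cr^2 = (a+b+c)*((-a+b+c)*(a-b+c)*(a+b-c))" "cr \<noteq> 0" "a > 0" "b > 0" "c > 0"
    "-a+b+c \<noteq> 0" "a-b+c \<noteq> 0" "a+b-c \<noteq> 0"
proof -
  show cr: "cr \<noteq> 0" using cross_ne0[OF nc] cr_def by simp
  have a2: "a^2 = (fst B - fst C)^2 + (snd B - snd C)^2" unfolding a_def by (rule dist_sq')
  have b2: "b^2 = (fst A - fst C)^2 + (snd A - snd C)^2" unfolding b_def by (rule dist_sq')
  have c2: "c^2 = (fst A - fst B)^2 + (snd A - snd B)^2" unfolding c_def by (rule dist_sq')
  have crd: "cr = (fst B - fst A)*(snd C - snd A) - (snd B - snd A)*(fst C - fst A)"
    by (simp add: cr_def cross2_def)
  show H: "4*cr^2 = (a+b+c)*((-a+b+c)*(a-b+c)*(a+b-c))"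
    unfolding crd using a2 b2 c2 by algebra
  have "A \<noteq> B" "A \<noteq> C" "B \<noteq> C" using nc by (auto simp: insert_commute)
  then show "a > 0" "b > 0" "c > 0" by (auto simp: a_def b_def c_def)
  have "4*cr^2 \<noteq> 0" using cr by simp
  then have "(a+b+c)*((-a+b+c)*(a-b+c)*(a+b-c)) \<noteq> 0" using H by metis
  then show "-a+b+c \<noteq> 0" "a-b+c \<noteq> 0" "a+b-c \<noteq> 0" by (metis mult_zero_left mult_zero_right)+
qed

lemma excentral_eq:
  assumes nc: "\<not> collinear {A,B,C}"
  defines "a \<equiv> dist B C" and "b \<equiv> dist A C" and "c \<equiv> dist A B"
    and "cr \<equiv> cross2 (B-A) (C-A)"
  shows "excentral_area A B C = \<bar>4*a*b*c/((-a+b+c)*(a-b+c)*(a+b-c)) * cr\<bar>/2"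
proof -
  note tb = tri_basic[OF nc, folded a_def b_def c_def cr_def]
  define i1 where "i1 = 1/(-a+b+c)"
  define i2 where "i2 = 1/(a-b+c)"
  define i3 where "i3 = 1/(a+b-c)"
  have i: "i1*(-a+b+c) = 1" "i2*(a-b+c) = 1" "i3*(a+b-c) = 1"
    using tb unfolding i1_def i2_def i3_def by auto
  have dc: "dist C A = b" "dist B A = c" "dist C B = a" "dist A C = b" "dist A B = c" "dist B C = a" by (simp_all add: a_def b_def c_def dist_commute)
  have e1: "fst (excenter A B C) = i1*(-a* fst A+b* fst B+c* fst C)" "snd (excenter A B C) = i1*(-a* snd A+b* snd B+c* snd C)"
    by (simp_all add: excenter_fst excenter_snd i1_def a_def b_def c_def)
  have e2: "fst (excenter B C A) = i2*(a* fst A-b* fst B+c* fst C)" "snd (excenter B C A) = i2*(a* snd A-b* snd B+c* snd C)"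
    by (simp_all add: excenter_fst excenter_snd i2_def dc algebra_simps)
  have e3: "fst (excenter C A B) = i3*(a* fst A+b* fst B-c* fst C)" "snd (excenter C A B) = i3*(a* snd A+b* snd B-c* snd C)"
    by (simp_all add: excenter_fst excenter_snd i3_def dc algebra_simps)
  have "cross2 (excenter B C A - excenter A B C) (excenter C A B - excenter A B C) = 4*a*b*c*i1*i2*i3*cr"
    unfolding cross2_def cr_def fst_diff snd_diff e1 e2 e3
    by (rule exc_alg0[OF i])
  moreover have "4*a*b*c*i1*i2*i3 = 4*a*b*c/((-a+b+c)*(a-b+c)*(a+b-c))"
    by (simp add: i1_def i2_def i3_def)
  ultimately show ?thesis unfolding excentral_area_def tri_area_def by simp
qed

lemma extouch_eq2:
  assumes nc: "\<not> collinear {A,B,C}"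
  defines "a \<equiv> dist B C" and "b \<equiv> dist A C" and "c \<equiv> dist A B"
    and "cr \<equiv> cross2 (B-A) (C-A)"
  shows "extouch_area A B C = \<bar>((-a+b+c)*(a-b+c)*(a+b-c))/(4*a*b*c) * cr\<bar>/2"
proof -
  note tb = tri_basic[OF nc, folded a_def b_def c_def cr_def]
  have nc2: "\<not> collinear {B,C,A}" "\<not> collinear {C,A,B}" using nc by (simp_all add: insert_commute)
  note tb2 = tri_basic[OF nc2(1)] and tb3 = tri_basic[OF nc2(2)]
  have dc: "dist C A = b" "dist B A = c" "dist C B = a" "dist A C = b" "dist A B = c" "dist B C = a" by (simp_all add: a_def b_def c_def dist_commute)
  define j1 where "j1 = 1/(2*a)"
  define j2 where "j2 = 1/(2*b)"
  define j3 where "j3 = 1/(2*c)"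
  have j: "j1*(2*a) = 1" "j2*(2*b) = 1" "j3*(2*c) = 1"
    using tb unfolding j1_def j2_def j3_def by auto
  have t1: "extouch_pt A B C = B + ((a+b-c)*j1) *\<^sub>R (C - B)"
  proof -
    have "extouch_pt A B C = B + ((dist B C + dist A C - dist A B)/(2*dist B C)) *\<^sub>R (C - B)"
      using extouch_eq[where A=A and B=B and C=C] tb by (simp add: a_def b_def c_def)
    then show ?thesis by (simp add: a_def b_def c_def j1_def)
  qed
  have t2: "extouch_pt B C A = C + ((-a+b+c)*j2) *\<^sub>R (A - C)"
  proof -
    have "extouch_pt B C A = C + ((dist C A + dist B A - dist B C)/(2*dist C A)) *\<^sub>R (A - C)"
      using extouch_eq[where A=B and B=C and C=A] tb by (simp add: dc)
    then show ?thesis by (simp add: dc j2_def algebra_simps)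
  qed
  have t3: "extouch_pt C A B = A + ((a-b+c)*j3) *\<^sub>R (B - A)"
  proof -
    have "extouch_pt C A B = A + ((dist A B + dist C B - dist C A)/(2*dist A B)) *\<^sub>R (B - A)"
      using extouch_eq[where A=C and B=A and C=B] tb by (simp add: dc c_def[symmetric] a_def[symmetric])
    then show ?thesis by (simp add: dc j3_def algebra_simps)
  qed
  have "cross2 (extouch_pt B C A - extouch_pt A B C) (extouch_pt C A B - extouch_pt A B C)
      = ((-a+b+c)*(a-b+c)*(a+b-c))*j1*j2*j3*2 * cr"
    unfolding cross2_def cr_def t1 t2 t3 fst_diff snd_diff fst_add snd_add fst_scaleR snd_scaleR real_scaleR_def
    by (rule ext_alg0[OF j])
  moreover have "((-a+b+c)*(a-b+c)*(a+b-c))*j1*j2*j3*2 = ((-a+b+c)*(a-b+c)*(a+b-c))/(4*a*b*c)"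
    by (simp add: j1_def j2_def j3_def mult.commute mult.left_commute)
  ultimately show ?thesis unfolding extouch_area_def tri_area_def by simp
qed

lemma circ_sq:
  assumes cr: "cross2 (B-A) (C-A) \<noteq> 0"
    and h: "dist Z A = R" "dist Z B = R" "dist Z C = R"
  shows "R^2 * (4*(cross2 (B-A) (C-A))^2) = (dist B C * dist A C * dist A B)^2"
proof -
  have a2: "(dist B C)^2 = (fst B - fst C)^2 + (snd B - snd C)^2" by (rule dist_sq')
  have b2: "(dist A C)^2 = (fst A - fst C)^2 + (snd A - snd C)^2" by (rule dist_sq')
  have c2: "(dist A B)^2 = (fst A - fst B)^2 + (snd A - snd B)^2" by (rule dist_sq')
  have z: "R^2 = (fst Z - fst A)^2 + (snd Z - snd A)^2" "R^2 = (fst Z - fst B)^2 + (snd Z - snd B)^2"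
     "R^2 = (fst Z - fst C)^2 + (snd Z - snd C)^2"
    using h dist_sq'[of Z A] dist_sq'[of Z B] dist_sq'[of Z C] by auto
  have crd: "(fst B - fst A)*(snd C - snd A) - (snd B - snd A)*(fst C - fst A) \<noteq> 0"
    using cr by (simp add: cross2_def)
  have "R^2 * (4*((fst B - fst A)*(snd C - snd A) - (snd B - snd A)*(fst C - fst A))^2) =
     ((dist B C)^2 * (dist A C)^2 * (dist A B)^2)"
    unfolding a2 b2 c2 using z crd by algebra
  then show ?thesis by (simp add: cross2_def power_mult_distrib)
qed

lemma circumradius_sq:
  assumes nc: "\<not> collinear {A,B,C}"
  shows "(circumradius A B C)^2 = (dist B C * dist A C * dist A B)^2 / (4*(cross2 (B-A) (C-A))^2)"
proof -
  define K where "K = (dist B C * dist A C * dist A B)^2 / (4*(cross2 (B-A) (C-A))^2)"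
  have cr: "cross2 (B-A) (C-A) \<noteq> 0" by (rule cross_ne0[OF nc])
  have uniq: "R = sqrt K" if "dist Z A = R" "dist Z B = R" "dist Z C = R" for Z R
  proof -
    have "R^2 * (4*(cross2 (B-A) (C-A))^2) = (dist B C * dist A C * dist A B)^2"
      by (rule circ_sq[OF cr that])
    then have "R^2 = K" unfolding K_def using cr by (simp add: field_simps)
    moreover have "R \<ge> 0" using that by auto
    ultimately show ?thesis by (metis real_sqrt_unique)
  qed
  define u1 where "u1 = fst B - fst A"
  define u2 where "u2 = snd B - snd A"
  define v1 where "v1 = fst C - fst A"
  define v2 where "v2 = snd C - snd A"
  define i where "i = 1/(2*(u1* v2-u2* v1))"
  have crd: "u1* v2-u2* v1 \<noteq> 0" using cr by (simp add: cross2_def u1_def u2_def v1_def v2_def)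
  have ii: "i*(2*(u1* v2-u2* v1)) = 1" using crd by (simp add: i_def)
  define Z where "Z = (fst A + i*(v2*(u1^2+u2^2) - u2*(v1^2+v2^2)), snd A + i*(u1*(v1^2+v2^2) - v1*(u1^2+u2^2)))"
  have sq1: "(dist Z B)^2 = (dist Z A)^2" unfolding dist_sq'
    using ii unfolding Z_def u1_def u2_def v1_def v2_def by simp algebra
  have sq2: "(dist Z C)^2 = (dist Z A)^2" unfolding dist_sq'
    using ii unfolding Z_def u1_def u2_def v1_def v2_def by simp algebra
  have "dist Z B = dist Z A" using sq1 by (simp add: power2_eq_iff_nonneg)
  moreover have "dist Z C = dist Z A" using sq2 by (simp add: power2_eq_iff_nonneg)
  ultimately have ex: "\<exists>Z. dist Z A = sqrt K \<and> dist Z B = sqrt K \<and> dist Z C = sqrt K"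
    using uniq[of Z "dist Z A"] by metis
  have "circumradius A B C = sqrt K"
    unfolding circumradius_def
    by (rule the_equality) (use ex uniq in auto)
  then show ?thesis unfolding K_def by simp
qed

lemma inradius_sq:
  assumes nc: "\<not> collinear {A,B,C}"
  shows "(inradius A B C)^2 = (cross2 (B-A) (C-A))^2 / (dist B C + dist A C + dist A B)^2"
proof -
  note tb = tri_basic[OF nc]
  define a where "a = dist B C"
  define b where "b = dist A C"
  define c where "c = dist A B"
  define cr where "cr = cross2 (B-A) (C-A)"
  have pos: "a > 0" "b > 0" "c > 0" using tb by (simp_all add: a_def b_def c_def)
  define ip where "ip = 1/(a+b+c)"
  have ip: "ip*(a+b+c) = 1" using pos by (simp add: ip_def)
  define I where "I = incenter A B C"
  have I: "fst I = ip*(a*fst A + b*fst B + c*fst C)" "snd I = ip*(a* snd A + b* snd B + c* snd C)"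
    by (simp_all add: I_def incenter_def ip_def a_def b_def c_def)
  define S where "S = affine hull {B, C}"
  define t where "t = ((I - B) \<bullet> (C - B)) / (norm (C - B))^2"
  define F where "F = foot I B C"
  have F: "F = B + t *\<^sub>R (C - B)" by (simp add: F_def foot_def t_def)
  have a2: "a^2 = (fst B - fst C)^2 + (snd B - snd C)^2" unfolding a_def by (rule dist_sq')
  have n2: "(norm (C - B))^2 = a^2" by (simp add: a_def dist_norm norm_minus_commute)
  have tt: "t * ((fst B - fst C)^2 + (snd B - snd C)^2) = (fst I - fst B)*(fst C - fst B) + (snd I - snd B)*(snd C - snd B)"
    using pos unfolding t_def n2 a2[symmetric] by (simp add: inner_prod_def)
  have FS: "F \<in> S" unfolding S_def affine_hull_2 F
    by (rule CollectI, rule exI[of _ "1-t"], rule exI[of _ t]) (simp add: algebra_simps)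
  have le: "dist I F \<le> dist I y" if "y \<in> S" for y
  proof -
    have "y \<in> {u *\<^sub>R B + v *\<^sub>R C |u v. u + v = 1}" using that by (simp add: S_def affine_hull_2)
    then obtain u v where y: "y = u *\<^sub>R B + v *\<^sub>R C" "u + v = 1" by blast
    have "(dist I y)^2 = (dist I F)^2 + (dist F y)^2"
      unfolding dist_sq' F y(1) using tt y(2) by simp algebra
    then have "(dist I F)^2 \<le> (dist I y)^2" by simp
    then show ?thesis by (simp add: power2_le_iff_abs_le)
  qed
  have "inradius A B C = dist I F"
  proof (rule antisym)
    show "inradius A B C \<le> dist I F" unfolding inradius_def I_def[symmetric] S_def[symmetric]
      by (rule infdist_le[OF FS])
    show "dist I F \<le> inradius A B C" unfolding inradius_def I_def[symmetric] S_def[symmetric]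
      using FS by (subst infdist_notempty) (auto intro!: cINF_greatest le)
  qed
  moreover have "(dist I F)^2 * (a+b+c)^2 = cr^2"
  proof -
    have crd: "cr = (fst B - fst A)*(snd C - snd A) - (snd B - snd A)*(fst C - fst A)"
      by (simp add: cr_def cross2_def)
    have "a \<noteq> 0" using pos by simp
    then show ?thesis unfolding dist_sq' F crd using tt a2 ip I by simp algebra
  qed
  moreover have "(a+b+c)^2 \<noteq> 0" using pos by simp
  ultimately show ?thesis by (simp add: eq_divide_eq cr_def a_def b_def c_def)
qed

lemma part1:
  assumes nc: "\<not> collinear {A,B,C}"
  defines "a \<equiv> dist B C" and "b \<equiv> dist A C" and "c \<equiv> dist A B"
  shows "excentral_area A B C / extouch_area A B C = 16*(a*b*c)^2/((-a+b+c)*(a-b+c)*(a+b-c))^2"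
    "(2 * circumradius A B C / inradius A B C)^2 = 16*(a*b*c)^2/((-a+b+c)*(a-b+c)*(a+b-c))^2"
proof -
  define cr where "cr = cross2 (B-A) (C-A)"
  define N where "N = (-a+b+c)*(a-b+c)*(a+b-c)"
  note tb = tri_basic[OF nc, folded a_def b_def c_def cr_def, folded N_def]
  have N0: "N \<noteq> 0" using tb by (simp add: N_def)
  have H: "4*cr^2 = (a+b+c)*N" using tb(1) by (simp add: N_def)
  have ex: "excentral_area A B C = \<bar>4*a*b*c/N * cr\<bar>/2"
    using excentral_eq[OF nc] by (simp add: N_def a_def b_def c_def cr_def)
  have et: "extouch_area A B C = \<bar>N/(4*a*b*c) * cr\<bar>/2"
    using extouch_eq2[OF nc] by (simp add: N_def a_def b_def c_def cr_def)
  have abc: "a*b*c \<noteq> 0" using tb by simp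
  have cr0: "cr \<noteq> 0" using tb by simp
  show "excentral_area A B C / extouch_area A B C = 16*(a*b*c)^2/((-a+b+c)*(a-b+c)*(a+b-c))^2"
    unfolding ex et N_def[symmetric] using abc N0 cr0
    by (simp add: abs_mult abs_divide field_simps power2_eq_square)
  have R2: "(circumradius A B C)^2 = (a*b*c)^2/(4*cr^2)"
    using circumradius_sq[OF nc] by (simp add: a_def b_def c_def cr_def)
  have r2: "(inradius A B C)^2 = cr^2/(a+b+c)^2"
    using inradius_sq[OF nc] by (simp add: a_def b_def c_def cr_def)
  have p: "a+b+c > 0" using tb by simp
  have "(2 * circumradius A B C / inradius A B C)^2 = 4 * (circumradius A B C)^2 / (inradius A B C)^2"
    by (simp add: power_divide power_mult_distrib)
  also have "\<dots> = (a*b*c)^2 * (a+b+c)^2 / cr^4"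
  proof -
    have "cr^2 \<noteq> 0" "(a+b+c)^2 \<noteq> 0" using cr0 p by auto
    then show ?thesis unfolding R2 r2 by (simp add: frac_eq_eq)
  qed
  also have "\<dots> = 16*(a*b*c)^2/N^2"
  proof -
    have h: "16 * cr^4 = (a+b+c)^2 * N^2" using H by algebra
    have "cr^4 \<noteq> 0" "N^2 \<noteq> 0" using cr0 N0 by auto
    then show ?thesis by (simp add: frac_eq_eq) (use h in algebra)
  qed
  finally show "(2 * circumradius A B C / inradius A B C)^2 = 16*(a*b*c)^2/((-a+b+c)*(a-b+c)*(a+b-c))^2"
    by (simp add: N_def)
qed

lemma bis_lemma:
  fixes n1 n2 U1 U2 W1 W2 du dw :: real
  assumes "du^2 = U1^2+U2^2" "dw^2 = W1^2+W2^2" "du \<noteq> 0" "dw \<noteq> 0"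
    "n1*((1/du)*U2 + (1/dw)*W2) - n2*((1/du)*U1 + (1/dw)*W1) = 0"
    "U1*W2 - U2*W1 \<noteq> 0" "n1^2+n2^2 \<noteq> 0"
  shows "(n1*U1+n2*U2)*dw = (n1*W1+n2*W2)*du"
proof -
  define iu where "iu = 1/du"
  define iw where "iw = 1/dw"
  have i: "iu*du = 1" "iw*dw = 1" using assms(3,4) by (simp_all add: iu_def iw_def)
  have h: "n1*(iu*U2 + iw*W2) - n2*(iu*U1 + iw*W1) = 0" using assms(5) by (simp add: iu_def iw_def)
  show ?thesis using assms(1,2,3,4,6,7) h i by algebra
qed

lemma lin_lemma:
  fixes X1 Y1 X2 Y2 G mu a b :: real
  assumes "X1^2+Y1^2=1" "X2^2+Y2^2=1" "G = 1 - X1*X2 - Y1*Y2" "G \<noteq> 0"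
    "G^2 = mu*(a^2*(X1-X2)^2 + b^2*(Y1-Y2)^2)"
  shows "(1-mu*(a^2-b^2))*X1*X2 + (1+mu*(a^2-b^2))*Y1*Y2 = 1 - mu*(a^2+b^2)"
  using assms by algebra

lemma vertex:
  assumes a: "a > 0" and b: "b > 0" and E: "on_ellipse a b P" and NB: "normal_bisects a b P Q R"
    and nc: "\<not> collinear {P,Q,R}"
  shows "(1 - fst P * fst Q/a^2 - snd P * snd Q/b^2) * dist P R = (1 - fst P * fst R/a^2 - snd P * snd R/b^2) * dist P Q"
proof -
  have e: "(fst P)^2/a^2 + (snd P)^2/b^2 = 1" using E by (simp add: on_ellipse_def)
  have PQ: "P \<noteq> Q" "P \<noteq> R" using nc by (auto simp: insert_commute)
  have du: "dist Q P \<noteq> 0" "dist R P \<noteq> 0" using PQ by auto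
  have cr: "(fst Q - fst P) * (snd R - snd P) - (snd Q - snd P) * (fst R - fst P) \<noteq> 0"
    using cross_ne0[OF nc] by (simp add: cross2_def)
  have n0: "(fst P/a^2)^2 + (snd P/b^2)^2 \<noteq> 0"
  proof
    assume "(fst P/a^2)^2 + (snd P/b^2)^2 = 0"
    then have "fst P = 0" "snd P = 0" using a b by (simp_all add: add_nonneg_eq_0_iff)
    then show False using e by simp
  qed
  have h5: "fst P/a^2 * ((1/dist Q P) * (snd Q - snd P) + (1/dist R P) * (snd R - snd P))
        - snd P/b^2 * ((1/dist Q P) * (fst Q - fst P) + (1/dist R P) * (fst R - fst P)) = 0"
    using NB by (simp add: normal_bisects_def cross2_def ellipse_normal_def int_bisector_dir_def)
  have main: "(fst P/a^2 * (fst Q - fst P) + snd P/b^2 * (snd Q - snd P)) * dist R P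
      = (fst P/a^2 * (fst R - fst P) + snd P/b^2 * (snd R - snd P)) * dist Q P"
    by (rule bis_lemma[OF dist_sq'[of Q P] dist_sq'[of R P] du h5 cr n0])
  have nU: "fst P/a^2 * (fst S - fst P) + snd P/b^2 * (snd S - snd P) = -(1 - fst P * fst S/a^2 - snd P * snd S/b^2)" for S
  proof -
    have "fst P/a^2 * (fst S - fst P) + snd P/b^2 * (snd S - snd P) = fst P * fst S/a^2 + snd P * snd S/b^2 - ((fst P)^2/a^2 + (snd P)^2/b^2)"
      by (simp add: algebra_simps power2_eq_square diff_divide_distrib add_divide_distrib)
    then show ?thesis using e by simp
  qed
  show ?thesis using main unfolding nU mult_minus_left neg_equal_iff_equal by (metis dist_commute)
qed

lemma cay_lemma:
  fixes X1 Y1 X2 Y2 X3 Y3 k al :: real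
  assumes "X1^2+Y1^2=1" "X2^2+Y2^2=1" "X3^2+Y3^2=1"
   "(1-k)*X1*X2+(1+k)*Y1*Y2 = al"
   "(1-k)*X2*X3+(1+k)*Y2*Y3 = al"
   "(1-k)*X3*X1+(1+k)*Y3*Y1 = al"
   "1-X1*X2-Y1*Y2 \<noteq> 0" "1-X2*X3-Y2*Y3 \<noteq> 0" "1-X3*X1-Y3*Y1 \<noteq> 0"
   "k*(X1^2-Y1^2)+al-1 \<noteq> 0"
  shows "k^2 = 1+2*al"
  using assms by algebra

lemma rr_lemma:
  fixes X1 Y1 X2 Y2 X3 Y3 k al :: real
  assumes "X1^2+Y1^2=1" "X2^2+Y2^2=1" "X3^2+Y3^2=1"
   "(1-k)*X1*X2+(1+k)*Y1*Y2 = al"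
   "(1-k)*X2*X3+(1+k)*Y2*Y3 = al"
   "(1-k)*X3*X1+(1+k)*Y3*Y1 = al"
   "1-X1*X2-Y1*Y2 \<noteq> 0" "1-X2*X3-Y2*Y3 \<noteq> 0" "1-X3*X1-Y3*Y1 \<noteq> 0"
   "k^2 = 1+2*al"
  shows "(-(1-X2*X3-Y2*Y3)+(1-X3*X1-Y3*Y1)+(1-X1*X2-Y1*Y2))*((1-X2*X3-Y2*Y3)-(1-X3*X1-Y3*Y1)+(1-X1*X2-Y1*Y2))*((1-X2*X3-Y2*Y3)+(1-X3*X1-Y3*Y1)-(1-X1*X2-Y1*Y2)) = -2*al*(1-X2*X3-Y2*Y3)*(1-X3*X1-Y3*Y1)*(1-X1*X2-Y1*Y2)"
  using assms by algebra

lemma billiard_core: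
  assumes ab: "a > b" and b: "b > 0" and BL: "billiard3 a b P1 P2 P3"
  shows "\<exists>mu>0. (mu*(a^2-b^2))^2 = 1 + 2*(1 - mu*(a^2+b^2)) \<and>
     (-dist P2 P3 + dist P1 P3 + dist P1 P2)*(dist P2 P3 - dist P1 P3 + dist P1 P2)*(dist P2 P3 + dist P1 P3 - dist P1 P2)
       = -2*(1 - mu*(a^2+b^2))*dist P2 P3*dist P1 P3*dist P1 P2"
proof -
  have a: "a > 0" using ab b by simp
  have nc: "\<not> collinear {P1,P2,P3}" and E1: "on_ellipse a b P1" and E2: "on_ellipse a b P2"
    and E3: "on_ellipse a b P3" and NB1: "normal_bisects a b P1 P2 P3" and NB2: "normal_bisects a b P2 P3 P1"
    using BL by (auto simp: billiard3_def)
  have nc2: "\<not> collinear {P2,P3,P1}" using nc by (simp add: insert_commute)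
  define d1 where "d1 = dist P2 P3"
  define d2 where "d2 = dist P1 P3"
  define d3 where "d3 = dist P1 P2"
  define X1 where "X1 = fst P1 / a"
  define Y1 where "Y1 = snd P1 / b"
  define X2 where "X2 = fst P2 / a"
  define Y2 where "Y2 = snd P2 / b"
  define X3 where "X3 = fst P3 / a"
  define Y3 where "Y3 = snd P3 / b"
  have xs: "fst P1 = a*X1" "snd P1 = b*Y1" "fst P2 = a*X2" "snd P2 = b*Y2" "fst P3 = a*X3" "snd P3 = b*Y3"
    using a b by (simp_all add: X1_def Y1_def X2_def Y2_def X3_def Y3_def)
  have circ: "X1^2+Y1^2=1" "X2^2+Y2^2=1" "X3^2+Y3^2=1"
    using E1 E2 E3 a b by (simp_all add: on_ellipse_def X1_def Y1_def X2_def Y2_def X3_def Y3_def power_divide)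
  define G1 where "G1 = 1-X2*X3-Y2*Y3"
  define G2 where "G2 = 1-X3*X1-Y3*Y1"
  define G3 where "G3 = 1-X1*X2-Y1*Y2"
  have gP: "1 - fst P * fst Q/a^2 - snd P * snd Q/b^2 = 1 - (fst P/a)*(fst Q/a) - (snd P/b)*(snd Q/b)" for P Q :: pt
    by (simp add: power2_eq_square)
  have v1: "G3 * d2 = G2 * d3"
    using vertex[OF a b E1 NB1 nc] unfolding gP
    by (simp add: G2_def G3_def d2_def d3_def X1_def X2_def X3_def Y1_def Y2_def Y3_def mult.commute)
  have v2: "G1 * d3 = G3 * d1"
    using vertex[OF a b E2 NB2 nc2] unfolding gP
    by (simp add: G1_def G3_def d1_def d3_def X1_def X2_def X3_def Y1_def Y2_def Y3_def mult.commute dist_commute)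
  have dd: "d1^2 = a^2*(X2-X3)^2 + b^2*(Y2-Y3)^2" "d2^2 = a^2*(X3-X1)^2 + b^2*(Y3-Y1)^2"
     "d3^2 = a^2*(X1-X2)^2 + b^2*(Y1-Y2)^2"
    unfolding d1_def d2_def d3_def dist_sq' xs by (simp_all add: power2_eq_square algebra_simps)
  have ne: "P1 \<noteq> P2" "P2 \<noteq> P3" "P1 \<noteq> P3" using nc by (auto simp: insert_commute)
  have dpos: "d1 > 0" "d2 > 0" "d3 > 0" using ne by (simp_all add: d1_def d2_def d3_def)
  have Gform: "2*(1 - U1*V1 - U2*V2) = (U1-V1)^2 + (U2-V2)^2" if "U1^2+U2^2 = 1" "V1^2+V2^2=1" for U1 U2 V1 V2 :: real
    using that by (simp add: power2_eq_square algebra_simps)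
  have G3pos: "G3 > 0"
  proof -
    have "(X1,Y1) \<noteq> (X2,Y2)"
    proof
      assume "(X1,Y1) = (X2,Y2)"
      then have "fst P1 = fst P2" "snd P1 = snd P2" using xs by auto
      then show False using ne(1) by (simp add: prod_eq_iff)
    qed
    then have "(X1-X2)^2 + (Y1-Y2)^2 > 0" by (auto simp: add_pos_nonneg sum_power2_gt_zero_iff)
    then show ?thesis using Gform[OF circ(1) circ(2)] by (simp add: G3_def)
  qed
  define J where "J = G3 / d3"
  have Jpos: "J > 0" using G3pos dpos by (simp add: J_def)
  have GJ: "G1 = J*d1" "G2 = J*d2" "G3 = J*d3"
    using v1 v2 dpos by (simp_all add: J_def field_simps)
  have Gne: "G1 \<noteq> 0" "G2 \<noteq> 0" "G3 \<noteq> 0" using GJ Jpos dpos by auto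
  define mu where "mu = J^2"
  have mupos: "mu > 0" using Jpos by (simp add: mu_def)
  have GG: "G1^2 = mu*d1^2" "G2^2 = mu*d2^2" "G3^2 = mu*d3^2"
    using GJ by (simp_all add: mu_def power_mult_distrib)
  define k where "k = mu*(a^2-b^2)"
  define al where "al = 1 - mu*(a^2+b^2)"
  have l3: "(1-k)*X1*X2+(1+k)*Y1*Y2 = al"
    using lin_lemma[OF circ(1) circ(2) G3_def Gne(3)] GG(3) dd(3) by (simp add: k_def al_def)
  have l1: "(1-k)*X2*X3+(1+k)*Y2*Y3 = al"
    using lin_lemma[OF circ(2) circ(3) G1_def Gne(1)] GG(1) dd(1) by (simp add: k_def al_def)
  have l2: "(1-k)*X3*X1+(1+k)*Y3*Y1 = al"
    using lin_lemma[OF circ(3) circ(1) G2_def Gne(2)] GG(2) dd(2) by (simp add: k_def al_def)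
  have degen: "k*(X1^2-Y1^2)+al-1 \<noteq> 0"
  proof -
    have "X1^2 - Y1^2 \<le> 1" using circ(1) by (simp add: algebra_simps) (smt (verit) zero_le_power2)
    moreover have "k \<ge> 0" using mupos ab b by (simp add: k_def mult_nonneg_nonneg)
    ultimately have "k*(X1^2-Y1^2) \<le> k" by (metis mult_left_mono mult.right_neutral)
    moreover have "k + al - 1 = -2*mu*b^2" by (simp add: k_def al_def algebra_simps)
    moreover have "mu*b^2 > 0" using mupos b by simp
    ultimately show ?thesis by linarith
  qed
  have G3': "1-X1*X2-Y1*Y2 \<noteq> 0" "1-X2*X3-Y2*Y3 \<noteq> 0" "1-X3*X1-Y3*Y1 \<noteq> 0"
    using Gne by (simp_all add: G1_def G2_def G3_def)
  have cay: "k^2 = 1+2*al"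
    by (rule cay_lemma[OF circ l3 l1 l2 G3' degen])
  have rr: "(-G1+G2+G3)*(G1-G2+G3)*(G1+G2-G3) = -2*al*G1*G2*G3"
    using rr_lemma[OF circ l3 l1 l2 G3' cay] by (simp add: G1_def G2_def G3_def)
  have "J^3 * ((-d1+d2+d3)*(d1-d2+d3)*(d1+d2-d3)) = J^3 * (-2*al*d1*d2*d3)"
    using rr unfolding GJ by (simp add: algebra_simps power3_eq_cube)
  moreover have "J^3 \<noteq> 0" using Jpos by simp
  ultimately have "(-d1+d2+d3)*(d1-d2+d3)*(d1+d2-d3) = -2*al*d1*d2*d3" by (metis mult_left_cancel)
  then show ?thesis using mupos cay unfolding k_def al_def d1_def d2_def d3_def by blast
qed

lemma ratio_val:
  assumes ab: "a > b" and b: "b > 0" and BL: "billiard3 a b P1 P2 P3"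
  shows "\<exists>mu>0. (mu*(a^2-b^2))^2 = 1 + 2*(1 - mu*(a^2+b^2)) \<and>
     excentral_area P1 P2 P3 / extouch_area P1 P2 P3 = 4/(1 - mu*(a^2+b^2))^2"
proof -
  have nc: "\<not> collinear {P1,P2,P3}" using BL by (simp add: billiard3_def)
  obtain mu where mu: "mu > 0" "(mu*(a^2-b^2))^2 = 1 + 2*(1 - mu*(a^2+b^2))"
    and N: "(-dist P2 P3 + dist P1 P3 + dist P1 P2)*(dist P2 P3 - dist P1 P3 + dist P1 P2)*(dist P2 P3 + dist P1 P3 - dist P1 P2)
       = -2*(1 - mu*(a^2+b^2))*dist P2 P3*dist P1 P3*dist P1 P2"
    using billiard_core[OF ab b BL] by blast
  define al where "al = 1 - mu*(a^2+b^2)"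
  define D where "D = dist P2 P3*dist P1 P3*dist P1 P2"
  note tb = tri_basic[OF nc]
  have D0: "D \<noteq> 0" using tb by (simp add: D_def)
  have N': "(-dist P2 P3 + dist P1 P3 + dist P1 P2)*(dist P2 P3 - dist P1 P3 + dist P1 P2)*(dist P2 P3 + dist P1 P3 - dist P1 P2) = -2*al*D"
    using N by (simp add: al_def D_def mult.assoc)
  have Nne: "(-dist P2 P3 + dist P1 P3 + dist P1 P2)*(dist P2 P3 - dist P1 P3 + dist P1 P2)*(dist P2 P3 + dist P1 P3 - dist P1 P2) \<noteq> 0"
    using tb by simp
  then have al0: "al \<noteq> 0" using N' by auto
  have "excentral_area P1 P2 P3 / extouch_area P1 P2 P3 = 16*D^2/(-2*al*D)^2"
    using part1(1)[OF nc] unfolding N' by (simp add: D_def)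
  also have "\<dots> = 4/al^2" using D0 al0 by (simp add: field_simps power2_eq_square)
  finally show ?thesis using mu by (auto simp: al_def)
qed

theorem theorem2:
  fixes a b :: real
  assumes "a > b" and "b > 0"
  shows "(\<forall>P1 P2 P3. billiard3 a b P1 P2 P3 \<longrightarrow>
            excentral_area P1 P2 P3 / extouch_area P1 P2 P3
              = (2 * circumradius P1 P2 P3 / inradius P1 P2 P3)^2)
       \<and> (\<forall>P1 P2 P3 Q1 Q2 Q3. billiard3 a b P1 P2 P3 \<and> billiard3 a b Q1 Q2 Q3 \<longrightarrow>
            excentral_area P1 P2 P3 / extouch_area P1 P2 P3
              = excentral_area Q1 Q2 Q3 / extouch_area Q1 Q2 Q3)"
proof (intro conjI allI impI)
  fix P1 P2 P3 assume "billiard3 a b P1 P2 P3"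
  then have nc: "\<not> collinear {P1,P2,P3}" by (simp add: billiard3_def)
  show "excentral_area P1 P2 P3 / extouch_area P1 P2 P3 = (2 * circumradius P1 P2 P3 / inradius P1 P2 P3)^2"
    using part1[OF nc] by simp
next
  fix P1 P2 P3 Q1 Q2 Q3 assume h: "billiard3 a b P1 P2 P3 \<and> billiard3 a b Q1 Q2 Q3"
  obtain m1 where m1: "m1 > 0" "(m1*(a^2-b^2))^2 = 1 + 2*(1 - m1*(a^2+b^2))"
    "excentral_area P1 P2 P3 / extouch_area P1 P2 P3 = 4/(1 - m1*(a^2+b^2))^2"
    using ratio_val[OF assms] h by blast
  obtain m2 where m2: "m2 > 0" "(m2*(a^2-b^2))^2 = 1 + 2*(1 - m2*(a^2+b^2))"
    "excentral_area Q1 Q2 Q3 / extouch_area Q1 Q2 Q3 = 4/(1 - m2*(a^2+b^2))^2"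
    using ratio_val[OF assms] h by blast
  have "(m1 - m2) * ((m1+m2)*(a^2-b^2)^2 + 2*(a^2+b^2)) = 0"
    using m1(2) m2(2) by algebra
  moreover have "(m1+m2)*(a^2-b^2)^2 + 2*(a^2+b^2) > 0"
    using m1(1) m2(1) assms by (simp add: add_pos_nonneg)
  ultimately have "m1 = m2" by simp
  then show "excentral_area P1 P2 P3 / extouch_area P1 P2 P3 = excentral_area Q1 Q2 Q3 / extouch_area Q1 Q2 Q3"
    using m1(3) m2(3) by simp
qed

end
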